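(* Consider the two optimization problems \[ \text{(P1)}\quad \min_{q\in\mathbb{R}^{n},\,\theta\in\mathbb{R}^{n}} \ \sum_{j=1}^{n} J_j(q_j) \quad\text{s.t.}\quad q-d-CB\tilde\theta=0,\quad \underline F\le B\tilde\theta\le \overline F,\quad\text{where }\tilde\theta:=C^T\theta, \] \[ \text{(P2)}\quad \min_{q\in\mathbb{R}^{n}} \ \sum_{j=1}^{n} J_j(q_j) \quad\text{s.t.}\quad \mathbf 1^T(q-d)=0,\quad H^T(q-d)\le F . \] Then $(q^*,\tilde\theta^* )$ is an optimal solution to (P1) (i.e. $(q^*,\theta^* )$ is optimal for some $\theta^*$ with $C^T\theta^*=\tilde\theta^*$) if and only if $\tilde\theta^*=C^TL^{\dagger}(q^*-d)$ and $q^*$ is an optimal solution to (P2).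
   Context: A power network is a connected directed graph $(\mathcal N,\mathcal E)$ with $\mathcal N=\{1,\dots,n\}$ and edge set $\mathcal E\subset\mathcal N\times\mathcal N$ (if $(j,k)\in\mathcal E$ then $(k,j)\notin\mathcal E$). $C\in\mathbb{R}^{n\times|\mathcal E|}$ is the incidence matrix: $C_{j,e}=1$ if $e=(j,k)\in\mathcal E$, $C_{j,e}=-1$ if $e=(k,j)\in\mathcal E$, and $0$ otherwise. $B=\mathrm{diag}(B_{jk},(j,k)\in\mathcal E)$ is a diagonal matrix with positive diagonal entries. $L:=CBC^T$ and $L^\dagger$ is its Moore–Penrose inverse. $H\in\mathbb{R}^{n\times 2|\mathcal E|}$ is defined by $H^T=\begin{bmatrix} BC^TL^\dagger\\ -BC^TL^\dagger\end{bmatrix}$. Given line limits $\underline F,\overline F\in\mathbb{R}^{|\mathcal E|}$, $F:=\begin{bmatrix}\overline F\\ -\underline F\end{bmatrix}$. $d\in\mathbb{R}^n$ is a given demand vector, and each $J_j:\mathbb{R}\to\mathbb{R}$ is strictly convex and twice differentiable. $\mathbf 1$ is the all-ones vector. *)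

theory Defs
  imports "HOL-Analysis.Analysis"
begin

text \<open>Nodes are indexed by a finite type 'n, edges by a finite type 'e.
  The map ends assigns to each edge index e the ordered pair (j,k) with e = (j,k).\<close>

definition power_network :: "('e::finite \<Rightarrow> 'n::finite \<times> 'n) \<Rightarrow> bool" where
  "power_network ends \<longleftrightarrow>
     inj ends \<and>
     (\<forall>j k. (j, k) \<in> range ends \<longrightarrow> (k, j) \<notin> range ends) \<and>
     (\<forall>u v. (u, v) \<in> (range ends \<union> converse (range ends))\<^sup>*)"

definition incidence :: "('e::finite \<Rightarrow> 'n::finite \<times> 'n) \<Rightarrow> real^'e^'n" where
  "incidence ends = (\<chi> j e. if fst (ends e) = j then 1
                              else if snd (ends e) = j then -1 else 0)"

definition diag_mat :: "('e::finite \<Rightarrow> real) \<Rightarrow> real^'e^'e" where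
  "diag_mat b = (\<chi> i j. if i = j then b i else 0)"

definition strict_convex_on :: "real set \<Rightarrow> (real \<Rightarrow> real) \<Rightarrow> bool" where
  "strict_convex_on S f \<longleftrightarrow>
     (\<forall>x\<in>S. \<forall>y\<in>S. x \<noteq> y \<longrightarrow> (\<forall>u. 0 < u \<and> u < 1 \<longrightarrow>
        f (u * x + (1 - u) * y) < u * f x + (1 - u) * f y))"

definition mp_pinv :: "real^'n::finite^'m::finite \<Rightarrow> real^'m^'n" where
  "mp_pinv A = (THE X. A ** X ** A = A \<and> X ** A ** X = X \<and>
                 transpose (A ** X) = A ** X \<and> transpose (X ** A) = X ** A)"

definition lap :: "('e::finite \<Rightarrow> 'n::finite \<times> 'n) \<Rightarrow> ('e \<Rightarrow> real) \<Rightarrow> real^'n^'n" where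
  "lap ends b = incidence ends ** diag_mat b ** transpose (incidence ends)"

text \<open>H^T, a (2|E|) x n matrix; the 2|E| rows are indexed by 'e + 'e.\<close>
definition HT :: "('e::finite \<Rightarrow> 'n::finite \<times> 'n) \<Rightarrow> ('e \<Rightarrow> real) \<Rightarrow> real^'n^('e + 'e)" where
  "HT ends b = (let M = diag_mat b ** transpose (incidence ends) ** mp_pinv (lap ends b)
                in (\<chi> r. case r of Inl e \<Rightarrow> M $ e | Inr e \<Rightarrow> - (M $ e)))"

definition Fvec :: "real^'e::finite \<Rightarrow> real^'e \<Rightarrow> real^('e + 'e)" where
  "Fvec Flo Fup = (\<chi> r. case r of Inl e \<Rightarrow> Fup $ e | Inr e \<Rightarrow> - (Flo $ e))"

definition objective :: "('n::finite \<Rightarrow> real \<Rightarrow> real) \<Rightarrow> real^'n \<Rightarrow> real" where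
  "objective J q = (\<Sum>j\<in>UNIV. J j (q $ j))"

definition P1_feasible ::
  "('e::finite \<Rightarrow> 'n::finite \<times> 'n) \<Rightarrow> ('e \<Rightarrow> real) \<Rightarrow> real^'n \<Rightarrow> real^'e \<Rightarrow> real^'e
   \<Rightarrow> real^'n \<Rightarrow> real^'n \<Rightarrow> bool" where
  "P1_feasible ends b d Flo Fup q \<theta> \<longleftrightarrow>
     (let C = incidence ends; B = diag_mat b; \<theta>t = transpose C *v \<theta> in
        q - d - C *v (B *v \<theta>t) = 0 \<and> Flo \<le> B *v \<theta>t \<and> B *v \<theta>t \<le> Fup)"

definition P1_optimal ::
  "('n::finite \<Rightarrow> real \<Rightarrow> real) \<Rightarrow> ('e::finite \<Rightarrow> 'n \<times> 'n) \<Rightarrow> ('e \<Rightarrow> real) \<Rightarrow> real^'n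
   \<Rightarrow> real^'e \<Rightarrow> real^'e \<Rightarrow> real^'n \<Rightarrow> real^'n \<Rightarrow> bool" where
  "P1_optimal J ends b d Flo Fup q \<theta> \<longleftrightarrow>
     P1_feasible ends b d Flo Fup q \<theta> \<and>
     (\<forall>q' \<theta>'. P1_feasible ends b d Flo Fup q' \<theta>' \<longrightarrow> objective J q \<le> objective J q')"

definition P2_feasible ::
  "('e::finite \<Rightarrow> 'n::finite \<times> 'n) \<Rightarrow> ('e \<Rightarrow> real) \<Rightarrow> real^'n \<Rightarrow> real^'e \<Rightarrow> real^'e
   \<Rightarrow> real^'n \<Rightarrow> bool" where
  "P2_feasible ends b d Flo Fup q \<longleftrightarrow>
     (1::real^'n) \<bullet> (q - d) = 0 \<and> HT ends b *v (q - d) \<le> Fvec Flo Fup"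

definition P2_optimal ::
  "('n::finite \<Rightarrow> real \<Rightarrow> real) \<Rightarrow> ('e::finite \<Rightarrow> 'n \<times> 'n) \<Rightarrow> ('e \<Rightarrow> real) \<Rightarrow> real^'n
   \<Rightarrow> real^'e \<Rightarrow> real^'e \<Rightarrow> real^'n \<Rightarrow> bool" where
  "P2_optimal J ends b d Flo Fup q \<longleftrightarrow>
     P2_feasible ends b d Flo Fup q \<and>
     (\<forall>q'. P2_feasible ends b d Flo Fup q' \<longrightarrow> objective J q \<le> objective J q')"

end

theory Submission
  imports Defs
begin
declare transpose_matrix_vector[simp del]

lemma ends_neq:
  assumes "power_network ends" shows "fst (ends e) \<noteq> snd (ends e)"
proof
  assume h: "fst (ends e) = snd (ends e)"
  have "(fst (ends e), snd (ends e)) \<in> range ends" by simp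
  then show False using assms h unfolding power_network_def by (metis rangeI)
qed

lemma CT_apply:
  assumes "power_network ends"
  shows "(transpose (incidence ends) *v x) $ e = x $ fst (ends e) - x $ snd (ends e)"
proof -
  have ne: "fst (ends e) \<noteq> snd (ends e)" using ends_neq[OF assms] .
  have "(transpose (incidence ends) *v x) $ e =
     (\<Sum>j\<in>UNIV. (if fst (ends e) = j then 1 else if snd (ends e) = j then -1 else 0) * x $ j)"
    by (simp add: matrix_vector_mult_def transpose_def incidence_def)
  also have "\<dots> = (\<Sum>j\<in>UNIV. (if fst (ends e) = j then x $ j else 0) + (if snd (ends e) = j then - x $ j else 0))"
    by (rule sum.cong) (use ne in auto)
  also have "\<dots> = x $ fst (ends e) - x $ snd (ends e)"
    by (simp add: sum.distrib)
  finally show ?thesis .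
qed

lemma CT_one:
  assumes "power_network ends"
  shows "transpose (incidence ends) *v (1::real^'n::finite) = 0"
  by (simp add: vec_eq_iff CT_apply[OF assms])

lemma diag_apply: "(diag_mat b *v y) $ e = b e * y $ e"
  by (simp add: matrix_vector_mult_def diag_mat_def if_distrib if_distribR cong: if_cong)

lemma diag_transpose: "transpose (diag_mat b) = diag_mat b"
  by (simp add: vec_eq_iff transpose_def diag_mat_def)

lemma lap_apply: "lap ends b *v x = incidence ends *v (diag_mat b *v (transpose (incidence ends) *v x))"
  by (simp add: lap_def matrix_vector_mul_assoc matrix_mul_assoc)

lemma lap_sym: "transpose (lap ends b) = lap ends b"
  by (simp add: lap_def matrix_transpose_mul diag_transpose matrix_mul_assoc)

lemma inner_C: "inner x (incidence ends *v y) = inner (transpose (incidence ends) *v x) y"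
  by (simp add: dot_lmul_matrix transpose_matrix_vector)

lemma quad:
  "inner x (lap ends b *v x) = (\<Sum>e\<in>UNIV. b e * ((transpose (incidence ends) *v x) $ e)^2)"
  unfolding lap_apply inner_C by (simp add: inner_vec_def diag_apply power2_eq_square mult_ac)

lemma lap_one:
  assumes "power_network ends" shows "lap ends b *v 1 = 0"
  by (simp add: lap_apply CT_one[OF assms])

lemma inner_one_lap:
  assumes "power_network ends" shows "inner 1 (lap ends b *v x) = 0"
proof -
  have "inner 1 (lap ends b *v x) = inner (transpose (lap ends b) *v 1) x"
    by (simp add: dot_lmul_matrix transpose_matrix_vector)
  then show ?thesis by (simp add: lap_sym lap_one[OF assms])
qed

lemma lap_ker:
  assumes net: "power_network ends" and bpos: "\<forall>e. 0 < b e"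
    and h: "lap ends b *v x = 0"
  shows "x = (x $ a) *\<^sub>R 1"
proof -
  have s0: "(\<Sum>e\<in>UNIV. b e * ((transpose (incidence ends) *v x) $ e)^2) = 0"
    using quad[of x ends b] h by simp
  moreover have nn: "\<And>e. e \<in> UNIV \<Longrightarrow> 0 \<le> b e * ((transpose (incidence ends) *v x) $ e)^2"
    using bpos by (simp add: less_imp_le)
  have z: "\<forall>e\<in>UNIV. b e * ((transpose (incidence ends) *v x) $ e)^2 = 0"
    by (rule sum_nonneg_eq_0_iff[THEN iffD1, OF finite nn s0])
  have edge: "x $ fst (ends e) = x $ snd (ends e)" for e
    using z[rule_format, of e, OF UNIV_I] bpos CT_apply[OF net, of x e] by (metis less_irrefl mult_eq_0_iff power_eq_0_iff right_minus_eq)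
  have R: "x $ u = x $ v" if "(u, v) \<in> range ends \<union> converse (range ends)" for u v
    using that edge by (auto; metis fst_conv snd_conv)
  have "x $ a = x $ v" for v
  proof -
    have "(a, v) \<in> (range ends \<union> converse (range ends))\<^sup>*"
      using net unfolding power_network_def by blast
    then show ?thesis
    proof (induction rule: rtrancl_induct)
      case (step y z) then show ?case using R[of y z] by simp
    qed simp
  qed
  then have "\<forall>i. x $ i = x $ a" by metis
  then show ?thesis by (simp add: vec_eq_iff)
qed

lemma pinv_unique:
  fixes A :: "real^'n::finite^'m::finite" and X Y :: "real^'m^'n"
  assumes X1: "A ** X ** A = A" and X2: "X ** A ** X = X"
    and X3: "transpose (A ** X) = A ** X" and X4: "transpose (X ** A) = X ** A"
    and Y1: "A ** Y ** A = A" and Y2: "Y ** A ** Y = Y"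
    and Y3: "transpose (A ** Y) = A ** Y" and Y4: "transpose (Y ** A) = Y ** A"
  shows "X = Y"
proof -
  have tA: "transpose A = transpose A ** transpose Y ** transpose A"
    using Y1 by (metis matrix_transpose_mul matrix_mul_assoc)
  have tA2: "transpose A = transpose A ** transpose X ** transpose A"
    using X1 by (metis matrix_transpose_mul matrix_mul_assoc)
  have "X = X ** (A ** X)" using X2 by (simp add: matrix_mul_assoc)
  also have "\<dots> = X ** (transpose X ** transpose A)" using X3 by (metis matrix_transpose_mul)
  also have "\<dots> = X ** (transpose X ** (transpose A ** transpose Y ** transpose A))" using tA by metis
  also have "\<dots> = X ** (transpose (A ** X) ** transpose (A ** Y))" by (simp add: matrix_transpose_mul matrix_mul_assoc)
  also have "\<dots> = X ** A ** X ** A ** Y" using X3 Y3 by (simp add: matrix_mul_assoc)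
  also have "\<dots> = X ** A ** Y" using X2 by simp
  finally have e1: "X = X ** A ** Y" .
  have "Y = (Y ** A) ** Y" using Y2 by (simp add: matrix_mul_assoc)
  also have "\<dots> = transpose A ** transpose Y ** Y" using Y4 by (metis matrix_transpose_mul)
  also have "\<dots> = (transpose A ** transpose X ** transpose A) ** transpose Y ** Y" using tA2 by metis
  also have "\<dots> = transpose (X ** A) ** transpose (Y ** A) ** Y" by (simp add: matrix_transpose_mul matrix_mul_assoc)
  also have "\<dots> = X ** A ** (Y ** A ** Y)" using X4 Y4 by (simp add: matrix_mul_assoc)
  also have "\<dots> = X ** A ** Y" using Y2 by simp
  finally show ?thesis using e1 by simp
qed

lemma inner_one_one: "inner (1::real^'n::finite) 1 = real CARD('n)"
  by (simp add: inner_vec_def)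

lemma Jc_apply:
  "(\<chi> i j. 1 / real CARD('n::finite)) *v (x::real^'n) = (inner 1 x / real CARD('n)) *\<^sub>R 1"
  by (simp add: vec_eq_iff matrix_vector_mult_def inner_vec_def sum_divide_distrib)

lemma Qm_apply:
  "(\<chi> i j. (if i = j then 1 else 0) - 1 / real CARD('n::finite)) *v (x::real^'n) =
     x - (inner 1 x / real CARD('n)) *\<^sub>R 1"
proof -
  have eq: "(\<chi> i j. (if i = j then 1 else 0) - 1 / real CARD('n::finite)) = mat 1 - (\<chi> i j. 1 / real CARD('n))"
    by (simp add: vec_eq_iff mat_def)
  show ?thesis unfolding eq by (simp add: matrix_vector_mult_diff_rdistrib Jc_apply)
qed

lemma pinv_props:
  fixes ends :: "'e::finite \<Rightarrow> 'n::finite \<times> 'n"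
  assumes net: "power_network ends" and bpos: "\<forall>e. 0 < b e"
  shows "\<forall>x. lap ends b *v (mp_pinv (lap ends b) *v x) = x - (inner 1 x / real CARD('n)) *\<^sub>R 1"
    and "\<forall>x. mp_pinv (lap ends b) *v (lap ends b *v x) = x - (inner 1 x / real CARD('n)) *\<^sub>R 1"
proof -
  define L where "L = lap ends b"
  define N where "N = real CARD('n)"
  define Jc :: "real^'n^'n" where "Jc = (\<chi> i j. 1 / N)"
  define Qm :: "real^'n^'n" where "Qm = (\<chi> i j. (if i = j then 1 else 0) - 1 / N)"
  have Npos: "N > 0" by (simp add: N_def)
  have Jc: "Jc *v x = (inner 1 x / N) *\<^sub>R 1" for x
    unfolding Jc_def N_def by (rule Jc_apply)
  have Qm: "Qm *v x = x - (inner 1 x / N) *\<^sub>R 1" for x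
    unfolding Qm_def N_def by (rule Qm_apply)
  have Qsym: "transpose Qm = Qm"
    by (simp add: Qm_def transpose_def vec_eq_iff eq_commute)
  have i11: "inner (1::real^'n) 1 = N" by (simp add: N_def inner_one_one)
  have L1: "L *v 1 = 0" unfolding L_def by (rule lap_one[OF net])
  have iL: "inner 1 (L *v x) = 0" for x unfolding L_def by (rule inner_one_lap[OF net])
  define Mm where "Mm = L + Jc"
  have M: "Mm *v x = L *v x + (inner 1 x / N) *\<^sub>R 1" for x
    by (simp add: Mm_def matrix_vector_mult_add_rdistrib Jc)
  have iM: "inner 1 (Mm *v x) = inner 1 x" for x
    using Npos by (simp add: M inner_add_right iL i11)
  have Minj: "\<forall>x. Mm *v x = 0 \<longrightarrow> x = 0"
  proof (intro allI impI)
    fix x assume h: "Mm *v x = 0"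
    have i0: "inner 1 x = 0" using iM[of x] h by simp
    then have "L *v x = 0" using h by (simp add: M)
    then have xe: "x = (x $ a) *\<^sub>R 1" for a unfolding L_def by (rule lap_ker[OF net bpos])
    have "inner 1 x = (x $ a) * N" for a by (subst xe[of a]) (simp add: i11)
    then have "x $ a = 0" for a using i0 Npos by simp
    then show "x = 0" by (simp add: vec_eq_iff)
  qed
  then obtain Mi where MiM: "Mi ** Mm = mat 1"
    using matrix_left_invertible_ker by blast
  then have MMi: "Mm ** Mi = mat 1" using matrix_left_right_inverse by blast
  have MiMv: "Mi *v (Mm *v x) = x" for x by (simp add: matrix_vector_mul_assoc MiM)
  have MMiv: "Mm *v (Mi *v x) = x" for x by (simp add: matrix_vector_mul_assoc MMi)
  have M1: "Mm *v 1 = 1" using Npos by (simp add: M L1 i11)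
  have Mi1: "Mi *v 1 = 1" using MiMv[of 1] M1 by simp
  have iMi: "inner 1 (Mi *v y) = inner 1 y" for y using iM[of "Mi *v y"] MMiv by simp
  define P where "P = Mi - Jc"
  have Pv: "P *v x = Mi *v x - (inner 1 x / N) *\<^sub>R 1" for x
    by (simp add: P_def matrix_vector_mult_diff_rdistrib Jc)
  have LP: "L *v (P *v x) = x - (inner 1 x / N) *\<^sub>R 1" for x
  proof -
    have "L *v (P *v x) = L *v (Mi *v x)"
      by (simp add: Pv matrix_vector_mult_diff_distrib matrix_vector_mult_scaleR L1)
    also have "\<dots> = Mm *v (Mi *v x) - (inner 1 (Mi *v x) / N) *\<^sub>R 1" by (simp add: M)
    finally show ?thesis by (simp add: MMiv iMi)
  qed
  have PL: "P *v (L *v x) = x - (inner 1 x / N) *\<^sub>R 1" for x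
  proof -
    have Lx: "L *v x = Mm *v x - (inner 1 x / N) *\<^sub>R 1" by (simp add: M)
    have "P *v (L *v x) = Mi *v (L *v x)" using iL[of x] by (simp add: Pv)
    also have "\<dots> = x - (inner 1 x / N) *\<^sub>R 1"
      by (simp add: Lx matrix_vector_mult_diff_distrib matrix_vector_mult_scaleR MiMv Mi1)
    finally show ?thesis .
  qed
  have P1: "P *v 1 = 0" using Npos by (simp add: Pv Mi1 i11)
  have iP: "inner 1 (P *v x) = 0" for x using Npos by (simp add: Pv inner_diff_right iMi i11)
  have LPm: "L ** P = Qm" by (simp add: matrix_eq Qm LP flip: matrix_vector_mul_assoc)
  have PLm: "P ** L = Qm" by (simp add: matrix_eq Qm PL flip: matrix_vector_mul_assoc)
  have c1: "L ** P ** L = L"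
    by (simp add: matrix_eq LP iL flip: matrix_vector_mul_assoc)
  have c2: "P ** L ** P = P"
    by (simp add: matrix_eq PL iP flip: matrix_vector_mul_assoc)
  have "mp_pinv L = P"
    unfolding mp_pinv_def
  proof (rule the_equality)
    show "L ** P ** L = L \<and> P ** L ** P = P \<and> transpose (L ** P) = L ** P \<and> transpose (P ** L) = P ** L"
      using c1 c2 LPm PLm Qsym by simp
  next
    fix X assume "L ** X ** L = L \<and> X ** L ** X = X \<and> transpose (L ** X) = L ** X \<and> transpose (X ** L) = X ** L"
    then show "X = P" using pinv_unique[of L X P] c1 c2 LPm PLm Qsym by simp
  qed
  then show "\<forall>x. lap ends b *v (mp_pinv (lap ends b) *v x) = x - (inner 1 x / real CARD('n)) *\<^sub>R 1"
    and "\<forall>x. mp_pinv (lap ends b) *v (lap ends b *v x) = x - (inner 1 x / real CARD('n)) *\<^sub>R 1"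
    using LP PL by (simp_all add: L_def N_def)
qed

lemma HT_le:
  "HT ends b *v v \<le> Fvec Flo Fup \<longleftrightarrow>
    Flo \<le> diag_mat b *v (transpose (incidence ends) *v (mp_pinv (lap ends b) *v v)) \<and>
    diag_mat b *v (transpose (incidence ends) *v (mp_pinv (lap ends b) *v v)) \<le> Fup"
proof -
  define Mx where "Mx = diag_mat b ** transpose (incidence ends) ** mp_pinv (lap ends b)"
  have e: "diag_mat b *v (transpose (incidence ends) *v (mp_pinv (lap ends b) *v v)) = Mx *v v"
    by (simp add: Mx_def matrix_vector_mul_assoc matrix_mul_assoc)
  have l: "(HT ends b *v v) $ Inl e = (Mx *v v) $ e" for e
    by (simp add: HT_def Mx_def Let_def matrix_vector_mult_def)
  have r: "(HT ends b *v v) $ Inr e = - (Mx *v v) $ e" for e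
    by (simp add: HT_def Mx_def Let_def matrix_vector_mult_def sum_negf)
  have "HT ends b *v v \<le> Fvec Flo Fup \<longleftrightarrow>
        (\<forall>e. (HT ends b *v v) $ Inl e \<le> Fvec Flo Fup $ Inl e) \<and> (\<forall>e. (HT ends b *v v) $ Inr e \<le> Fvec Flo Fup $ Inr e)"
    unfolding less_eq_vec_def by (metis sum.exhaust)
  also have "\<dots> \<longleftrightarrow> (\<forall>e. (Mx *v v) $ e \<le> Fup $ e) \<and> (\<forall>e. Flo $ e \<le> (Mx *v v) $ e)"
    by (simp add: l r Fvec_def)
  finally show ?thesis unfolding e less_eq_vec_def by blast
qed

lemma feas1:
  fixes ends :: "'e::finite \<Rightarrow> 'n::finite \<times> 'n"
  assumes net: "power_network ends" and bpos: "\<forall>e. 0 < b e"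
    and f: "P1_feasible ends b d Flo Fup q \<theta>"
  shows "transpose (incidence ends) *v \<theta> = transpose (incidence ends) *v (mp_pinv (lap ends b) *v (q - d))
     \<and> P2_feasible ends b d Flo Fup q"
proof -
  let ?C = "incidence ends" and ?B = "diag_mat b" and ?P = "mp_pinv (lap ends b)"
  have qd: "q - d = lap ends b *v \<theta>"
    using f unfolding P1_feasible_def Let_def by (simp add: lap_apply)
  have bnd: "Flo \<le> ?B *v (transpose ?C *v \<theta>)" "?B *v (transpose ?C *v \<theta>) \<le> Fup"
    using f unfolding P1_feasible_def Let_def by auto
  have c: "transpose ?C *v (?P *v (q - d)) = transpose ?C *v \<theta>"
    using pinv_props(2)[OF net bpos]
    by (simp add: qd matrix_vector_mult_diff_distrib matrix_vector_mult_scaleR CT_one[OF net])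
  have i: "inner 1 (q - d) = 0" by (simp add: qd inner_one_lap[OF net])
  show ?thesis
    unfolding P2_feasible_def HT_le using c i bnd by simp
qed

lemma feas2:
  fixes ends :: "'e::finite \<Rightarrow> 'n::finite \<times> 'n"
  assumes net: "power_network ends" and bpos: "\<forall>e. 0 < b e"
    and f: "P2_feasible ends b d Flo Fup q"
  shows "P1_feasible ends b d Flo Fup q (mp_pinv (lap ends b) *v (q - d))"
proof -
  have i: "inner 1 (q - d) = 0" and bnd:
    "Flo \<le> diag_mat b *v (transpose (incidence ends) *v (mp_pinv (lap ends b) *v (q - d)))"
    "diag_mat b *v (transpose (incidence ends) *v (mp_pinv (lap ends b) *v (q - d))) \<le> Fup"
    using f unfolding P2_feasible_def HT_le by auto
  have "lap ends b *v (mp_pinv (lap ends b) *v (q - d)) = q - d"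
    using pinv_props(1)[OF net bpos] i by simp
  then show ?thesis unfolding P1_feasible_def Let_def using bnd by (simp add: lap_apply)
qed

theorem lemma1:
  fixes ends :: "'e::finite \<Rightarrow> 'n::finite \<times> 'n"
    and b :: "'e \<Rightarrow> real"
    and J :: "'n \<Rightarrow> real \<Rightarrow> real"
    and d :: "real^'n"
    and Flo Fup :: "real^'e"
    and qs :: "real^'n" and ths :: "real^'e"
  assumes net: "power_network ends"
    and bpos: "\<forall>e. 0 < b e"
    and Jconv: "\<forall>j. strict_convex_on UNIV (J j)"
    and Jdiff: "\<forall>j. \<exists>J' J''. \<forall>x. (J j has_real_derivative J' x) (at x) \<and>
                                   (J' has_real_derivative J'' x) (at x)"
  shows "(\<exists>\<theta>. transpose (incidence ends) *v \<theta> = ths \<and> P1_optimal J ends b d Flo Fup qs \<theta>)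
     \<longleftrightarrow> (ths = transpose (incidence ends) *v (mp_pinv (lap ends b) *v (qs - d))
          \<and> P2_optimal J ends b d Flo Fup qs)"
proof
  assume "\<exists>\<theta>. transpose (incidence ends) *v \<theta> = ths \<and> P1_optimal J ends b d Flo Fup qs \<theta>"
  then obtain \<theta> where t: "transpose (incidence ends) *v \<theta> = ths"
    and o: "P1_optimal J ends b d Flo Fup qs \<theta>" by blast
  have f1: "P1_feasible ends b d Flo Fup qs \<theta>" using o unfolding P1_optimal_def by blast
  note F = feas1[OF net bpos f1]
  have "P2_optimal J ends b d Flo Fup qs"
    unfolding P2_optimal_def
  proof (intro conjI allI impI)
    show "P2_feasible ends b d Flo Fup qs" using F by blast
    fix q' assume "P2_feasible ends b d Flo Fup q'"
    then have "P1_feasible ends b d Flo Fup q' (mp_pinv (lap ends b) *v (q' - d))"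
      by (rule feas2[OF net bpos])
    then show "objective J qs \<le> objective J q'" using o unfolding P1_optimal_def by blast
  qed
  then show "ths = transpose (incidence ends) *v (mp_pinv (lap ends b) *v (qs - d))
          \<and> P2_optimal J ends b d Flo Fup qs" using F t by simp
next
  assume h: "ths = transpose (incidence ends) *v (mp_pinv (lap ends b) *v (qs - d))
          \<and> P2_optimal J ends b d Flo Fup qs"
  have f2: "P2_feasible ends b d Flo Fup qs" using h unfolding P2_optimal_def by blast
  have "P1_optimal J ends b d Flo Fup qs (mp_pinv (lap ends b) *v (qs - d))"
    unfolding P1_optimal_def
  proof (intro conjI allI impI)
    show "P1_feasible ends b d Flo Fup qs (mp_pinv (lap ends b) *v (qs - d))"
      by (rule feas2[OF net bpos f2])
    fix q' \<theta>' assume "P1_feasible ends b d Flo Fup q' \<theta>'"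
    then have "P2_feasible ends b d Flo Fup q'" using feas1[OF net bpos] by blast
    then show "objective J qs \<le> objective J q'" using h unfolding P2_optimal_def by blast
  qed
  then show "\<exists>\<theta>. transpose (incidence ends) *v \<theta> = ths \<and> P1_optimal J ends b d Flo Fup qs \<theta>"
    using h by blast
qed

end
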